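(* Let $0\leq \beta<1$ and $m \in \mathbb{N}$. Let $f(z)=z+\sum_{k=1}^{\infty} a_{mk+1}z^{mk+1}$ belong to $\Theta_{\Sigma_m}(1,1,0,0;\beta)$ (the case $\tau=\lambda=1$, $\gamma=\delta=0$). Then $$|a_{m+1}| \leq \min\left\{\frac{2(1-\beta)}{1+m},\ 2\sqrt{\frac{1-\beta}{(m+1)(1+2m)}}\right\}\quad\text{and}\quad |a_{2m+1}| \leq \frac{2(1-\beta)}{1+2m}.$$
   Context: Let $\mathbb{U}=\{z\in\mathbb{C}:|z|<1\}$ and $m\in\mathbb{N}$. $\mathcal{A}_m$ denotes the class of functions analytic in $\mathbb{U}$ of the form $f(z)=z+\sum_{k=1}^{\infty}a_{mk+1}z^{mk+1}$. $\Sigma_m$ denotes the class of $m$-fold symmetric bi-univalent functions: functions $f\in\mathcal{A}_m$ univalent in $\mathbb{U}$ whose inverse $f^{-1}$ extends to a univalent function $g$ on $\mathbb{U}$; this $g$ has the expansion $g(w)=w-a_{m+1}w^{m+1}+\left[(m+1)a_{m+1}^2-a_{2m+1}\right]w^{2m+1}-\cdots$. For $\delta\in\mathbb{N}_0$ and $h(z)=z+\sum_{k\ge1}c_{mk+1}z^{mk+1}$ analytic in $\mathbb{U}$, the $m$-fold Ruscheweyh derivative is $\mathcal{R}^\delta h(z)=z+\sum_{k=1}^{\infty}\frac{\Gamma(\delta+k+1)}{\Gamma(k+1)\Gamma(\delta+1)}c_{mk+1}z^{mk+1}$ (for $\delta=0$ it is the identity). For such $h$ and parameters $\lambda,\gamma,\tau\neq0,\delta$,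 put $$J_h(z)=1+\frac{1}{\tau}\Big[(1-\lambda)(1-\gamma)\frac{\mathcal{R}^\delta h(z)}{z}+(\lambda(\gamma+1)+\gamma)(\mathcal{R}^\delta h)'(z)+\lambda\gamma\big(z(\mathcal{R}^\delta h)''(z)-2\big)-1\Big].$$ For $0\le\beta<1$, $\Theta_{\Sigma_m}(\tau,\lambda,\gamma,\delta;\beta)$ is the set of $f\in\Sigma_m$ such that $\operatorname{Re}J_f(z)>\beta$ for all $z\in\mathbb{U}$ and $\operatorname{Re}J_g(w)>\beta$ for all $w\in\mathbb{U}$, where $g$ is the extension of $f^{-1}$ to $\mathbb{U}$. *)

theory Defs
  imports "HOL-Complex_Analysis.Complex_Analysis"
begin

definition tcoeff :: "(complex \<Rightarrow> complex) \<Rightarrow> nat \<Rightarrow> complex" where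
  "tcoeff h n = (deriv ^^ n) h 0 / of_nat (fact n)"

definition mfold_A :: "nat \<Rightarrow> (complex \<Rightarrow> complex) \<Rightarrow> bool" where
  "mfold_A m f \<longleftrightarrow> f holomorphic_on ball 0 1 \<and> tcoeff f 1 = 1 \<and>
     (\<forall>n. (\<forall>k. n \<noteq> m * k + 1) \<longrightarrow> tcoeff f n = 0)"

text \<open>g is a univalent extension to the unit disc of the inverse f^{-1}
  (g agrees with f^{-1} on a neighbourhood of 0).\<close>
definition inv_extension :: "(complex \<Rightarrow> complex) \<Rightarrow> (complex \<Rightarrow> complex) \<Rightarrow> bool" where
  "inv_extension f g \<longleftrightarrow> g holomorphic_on ball 0 1 \<and> inj_on g (ball 0 1) \<and>
     (\<exists>r>0. \<forall>w\<in>ball 0 r. g w \<in> ball 0 1 \<and> f (g w) = w)"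

definition Sigma_m :: "nat \<Rightarrow> (complex \<Rightarrow> complex) set" where
  "Sigma_m m = {f. mfold_A m f \<and> inj_on f (ball 0 1) \<and> (\<exists>g. inv_extension f g)}"

definition rusch :: "nat \<Rightarrow> nat \<Rightarrow> (complex \<Rightarrow> complex) \<Rightarrow> complex \<Rightarrow> complex" where
  "rusch m \<delta> h z = (if \<delta> = 0 then h z else
     z + (\<Sum>k. if k = 0 then 0 else
            of_nat ((\<delta> + k) choose k) * tcoeff h (m * k + 1) * z ^ (m * k + 1)))"

text \<open>The functional J_h (the quotient R h(z)/z is taken with its removable value 1 at z = 0).\<close>
definition J_fun :: "nat \<Rightarrow> complex \<Rightarrow> complex \<Rightarrow> complex \<Rightarrow> nat \<Rightarrow> (complex \<Rightarrow> complex)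
    \<Rightarrow> complex \<Rightarrow> complex" where
  "J_fun m \<tau> lam \<gamma> \<delta> h z = 1 + (1 / \<tau>) *
     ((1 - lam) * (1 - \<gamma>) * (if z = 0 then 1 else rusch m \<delta> h z / z)
      + (lam * (\<gamma> + 1) + \<gamma>) * deriv (rusch m \<delta> h) z
      + lam * \<gamma> * (z * deriv (deriv (rusch m \<delta> h)) z - 2) - 1)"

definition Theta :: "nat \<Rightarrow> complex \<Rightarrow> complex \<Rightarrow> complex \<Rightarrow> nat \<Rightarrow> real
    \<Rightarrow> (complex \<Rightarrow> complex) set" where
  "Theta m \<tau> lam \<gamma> \<delta> \<beta> = {f. f \<in> Sigma_m m \<and>
     (\<forall>z\<in>ball 0 1. Re (J_fun m \<tau> lam \<gamma> \<delta> f z) > \<beta>) \<and>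
     (\<forall>g. inv_extension f g \<longrightarrow> (\<forall>w\<in>ball 0 1. Re (J_fun m \<tau> lam \<gamma> \<delta> g w) > \<beta>))}"

end

theory Submission
  imports Defs
begin


lemma roots_sum:
  fixes n k :: nat
  assumes n: "n \<ge> 1" and k: "k \<le> n"
  defines "\<omega> \<equiv> exp (2 * of_real pi * \<i> / of_nat n)"
  shows "(\<Sum>j<n. (\<omega>^j)^k) = (if k = 0 \<or> k = n then of_nat n else 0)"
proof -
  have pw: "\<omega> ^ k = exp (of_nat k * (2 * of_real pi * \<i> / of_nat n))"
    by (simp only: \<omega>_def exp_of_nat_mult)
  have eq: "(\<Sum>j<n. (\<omega>^j)^k) = (\<Sum>j<n. (\<omega>^k)^j)"
    by (simp add: power_mult[symmetric] mult.commute)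
  show ?thesis
  proof (cases "k = 0 \<or> k = n")
    case True
    then have "\<omega>^k = 1" using n unfolding pw by auto
    then show ?thesis using True eq by simp
  next
    case False
    then have k0: "0 < k" "k < n" using k by auto
    have ne: "\<omega>^k \<noteq> 1"
    proof
      assume "\<omega>^k = 1"
      then obtain i :: int where i: "real k * (2 * pi) / real n = 2 * of_int i * pi"
        unfolding pw exp_eq_1 by auto
      then have "real k = real n * of_int i" using n by (simp add: field_simps)
      then have "int k = int n * i" by (metis of_int_mult of_int_of_nat_eq of_int_eq_iff)
      note kk = this
      show False
      proof (cases "i \<le> 0")
        case True
        then have "int n * i \<le> 0" by (simp add: mult_nonneg_nonpos)
        then show False using kk k0 by linarith
      next
        case False
        then have "int n * 1 \<le> int n * i" by (intro mult_left_mono) auto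
        then show False using kk k0 by linarith
      qed
    qed
    have "(\<omega>^k)^n = 1"
      by (simp add: power_mult[symmetric] pw exp_of_nat_mult[symmetric] del: of_nat_Suc) (use n in \<open>simp add: field_simps\<close>)
    then show ?thesis using False eq ne by (simp add: sum_gp_strict)
  qed
qed

lemma tcoeff_fps: "tcoeff h n = fps_expansion h 0 $ n"
  by (simp add: tcoeff_def fps_expansion_def)

lemma carath:
  fixes h :: "complex \<Rightarrow> complex" and \<beta> :: real and n :: nat
  assumes hol: "h holomorphic_on ball 0 1" and h0: "h 0 = 1"
    and re: "\<And>z. z \<in> ball 0 1 \<Longrightarrow> Re (h z) > \<beta>" and b1: "\<beta> < 1" and n: "n \<ge> 1"
  shows "norm (tcoeff h n) \<le> 2 * (1 - \<beta>)"
proof -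
  define \<omega> where "\<omega> = exp (2 * of_real pi * \<i> / of_nat n)"
  have n\<omega>: "norm (\<omega>^j) = 1" for j
    by (simp add: \<omega>_def norm_power norm_exp_eq_Re)
  define F where "F = fps_expansion h 0"
  have hF: "h has_fps_expansion F" unfolding F_def
    by (rule has_fps_expansion_fps_expansion[OF _ _ hol]) auto
  define H where "H = (\<lambda>z. (1 / of_nat n) * (\<Sum>j<n. h (\<omega>^j * z)))"
  define FH where "FH = fps_const (1 / of_nat n) * (\<Sum>j<n. Abs_fps (\<lambda>k. (\<omega>^j)^k * F$k))"
  have HFH: "H has_fps_expansion FH"
    unfolding H_def FH_def
  proof (intro has_fps_expansion_cmult_left has_fps_expansion_sum)
    fix j assume "j \<in> {..<n}"
    have "(h \<circ> (\<lambda>z. \<omega>^j * z)) has_fps_expansion (F oo (fps_const (\<omega>^j) * fps_X))"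
      by (intro has_fps_expansion_compose hF has_fps_expansion_cmult_left has_fps_expansion_fps_X) simp
    then show "(\<lambda>z. h (\<omega>^j * z)) has_fps_expansion Abs_fps (\<lambda>k. (\<omega>^j)^k * F$k)"
      by (simp add: fps_compose_linear o_def)
  qed
  have FHk: "FH $ k = (1 / of_nat n) * (\<Sum>j<n. (\<omega>^j)^k) * F$k" for k
    unfolding FH_def by (simp add: fps_sum_nth sum_distrib_right)
  have F0: "F$0 = 1" using fps_nth_fps_expansion[OF hF, of 0] h0 by simp
  have nz: "(of_nat n :: complex) \<noteq> 0" using n by simp
  have FH0: "FH$0 = 1" using FHk[of 0] roots_sum[OF n, of 0] F0 nz unfolding \<omega>_def by simp
  have FHi: "FH$i = 0" if "0 < i" "i < n" for i
    using FHk[of i] roots_sum[OF n, of i] that unfolding \<omega>_def by simp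
  have FHn: "FH$n = F$n"
    using FHk[of n] roots_sum[OF n, of n] nz unfolding \<omega>_def by simp
  have comp: "(\<lambda>z. h (\<omega>^j * z)) holomorphic_on ball 0 1" for j
  proof -
    have "(h \<circ> (\<lambda>z. \<omega>^j * z)) holomorphic_on ball 0 1"
      by (rule holomorphic_on_compose_gen[OF _ hol]) (auto intro!: holomorphic_intros simp: norm_mult n\<omega>)
    then show ?thesis by (simp add: o_def)
  qed
  have Hhol: "H holomorphic_on ball 0 1"
    unfolding H_def by (intro holomorphic_intros comp)
  have ReH: "Re (H z) > \<beta>" if z: "z \<in> ball 0 1" for z
  proof -
    have zz: "\<omega>^j * z \<in> ball 0 1" for j using z by (simp add: norm_mult n\<omega>)
    have "(\<Sum>j<n. \<beta>) < (\<Sum>j<n. Re (h (\<omega>^j * z)))"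
      by (rule sum_strict_mono) (use n re zz in \<open>auto simp: lessThan_empty_iff\<close>)
    then have lt: "real n * \<beta> < Re (\<Sum>j<n. h (\<omega>^j * z))" by (simp add: Re_sum)
    have ReHz: "Re (H z) = Re (\<Sum>j<n. h (\<omega>^j * z)) / real n"
      unfolding H_def by (simp add: Re_divide_of_nat[symmetric])
    have np: "0 < real n" using n by simp
    show ?thesis unfolding ReHz pos_less_divide_eq[OF np] using lt by (simp add: mult.commute)
  qed
  define c where "c = complex_of_real (1 - 2 * \<beta>)"
  have Dnz: "H z + c \<noteq> 0" if "z \<in> ball 0 1" for z
  proof -
    have pos: "Re (H z + c) > 0" using ReH[OF that] b1 by (simp add: c_def)
    show ?thesis
    proof
      assume "H z + c = 0"
      then have "Re (H z + c) = 0" by simp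
      then show False using pos by simp
    qed
  qed
  define \<phi> where "\<phi> = (\<lambda>z. (H z - 1) / (H z + c))"
  have \<phi>hol: "\<phi> holomorphic_on ball 0 1"
    unfolding \<phi>_def by (intro holomorphic_intros Hhol) (use Dnz in auto)
  have \<phi>le: "norm (\<phi> z) \<le> 1" if "z \<in> ball 0 1" for z
  proof -
    have x: "Re (H z) > \<beta>" using ReH[OF that] .
    have "norm (H z - 1) \<le> norm (H z + c)"
      unfolding cmod_def c_def
    proof (rule real_sqrt_le_mono)
      show "(Re (H z - 1))\<^sup>2 + (Im (H z - 1))\<^sup>2 \<le> (Re (H z + complex_of_real (1 - 2 * \<beta>)))\<^sup>2 + (Im (H z + complex_of_real (1 - 2 * \<beta>)))\<^sup>2"
      proof -
        define u where "u = Re (H z)"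
        have "(u + (1 - 2 * \<beta>))\<^sup>2 - (u - 1)\<^sup>2 = 4 * ((u - \<beta>) * (1 - \<beta>))"
          by (simp add: power2_eq_square algebra_simps)
        moreover have "(u - \<beta>) * (1 - \<beta>) \<ge> 0" using x b1 unfolding u_def by simp
        ultimately have "(u - 1)\<^sup>2 \<le> (u + (1 - 2 * \<beta>))\<^sup>2" by linarith
        then show ?thesis unfolding u_def by simp
      qed
    qed
    then show ?thesis unfolding \<phi>_def using Dnz[OF that] by (simp add: norm_divide divide_le_eq_1)
  qed
  define F\<phi> where "F\<phi> = fps_expansion \<phi> 0"
  have h\<phi>: "\<phi> has_fps_expansion F\<phi>" unfolding F\<phi>_def
    by (rule has_fps_expansion_fps_expansion[OF _ _ \<phi>hol]) auto
  define D where "D = FH + fps_const c"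
  have prod: "F\<phi> * D = FH - 1"
  proof -
    have hm: "(\<lambda>z. \<phi> z * (H z + c)) has_fps_expansion F\<phi> * D"
      unfolding D_def by (intro has_fps_expansion_mult has_fps_expansion_add h\<phi> HFH has_fps_expansion_const)
    have ev: "eventually (\<lambda>z. \<phi> z * (H z + c) = H z - 1) (nhds 0)"
      using eventually_nhds_in_open[of "ball 0 1" 0]
      by (rule eventually_mono) (auto simp: \<phi>_def Dnz)
    have "(\<lambda>z. H z - 1) has_fps_expansion F\<phi> * D"
      using has_fps_expansion_cong[OF ev refl] hm by simp
    moreover have "(\<lambda>z. H z - 1) has_fps_expansion FH - 1"
      by (intro has_fps_expansion_diff HFH has_fps_expansion_1)
    ultimately show ?thesis by (rule fps_expansion_unique_complex)
  qed
  have D0: "D$0 = 2 - 2 * of_real \<beta>" unfolding D_def c_def using FH0 by simp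
  have D0nz: "D$0 \<noteq> 0"
  proof
    assume "D$0 = 0"
    then have "Re (D$0) = 0" by simp
    then show False using b1 unfolding D0 by simp
  qed
  have split: "(F\<phi> * D)$i = F\<phi>$i * D$0 + (\<Sum>j<i. F\<phi>$j * D$(i-j))" for i
  proof -
    have "{0..i} = insert i {..<i}" by auto
    then show ?thesis by (simp add: fps_mult_nth)
  qed
  have low: "F\<phi>$i = 0" if "i < n" for i
    using that
  proof (induction i rule: less_induct)
    case (less i)
    have "(\<Sum>j<i. F\<phi>$j * D$(i-j)) = 0" using less by (intro sum.neutral) auto
    moreover have "(FH - 1)$i = 0"
      using FH0 FHi[of i] less.prems by (cases "i = 0") auto
    ultimately have "F\<phi>$i * D$0 = 0" using split[of i] prod by simp
    then show ?case using D0nz by simp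
  qed
  have top: "F\<phi>$n * D$0 = F$n"
  proof -
    have "(\<Sum>j<n. F\<phi>$j * D$(n-j)) = 0" using low by (intro sum.neutral) auto
    moreover have "(FH - 1)$n = F$n" using FHn n by simp
    ultimately show ?thesis using split[of n] prod by simp
  qed
  have bnd: "norm (F\<phi>$n) * r^n \<le> 1" if r: "0 < r" "r < 1" for r
  proof -
    have "norm ((deriv ^^ n) \<phi> 0) \<le> fact n * 1 / r^n"
    proof (rule Cauchy_inequality)
      show "\<phi> holomorphic_on ball 0 r" using \<phi>hol by (rule holomorphic_on_subset) (use r in auto)
      show "continuous_on (cball 0 r) \<phi>"
        using holomorphic_on_imp_continuous_on[OF \<phi>hol] by (rule continuous_on_subset) (use r in auto)
      show "\<And>x. norm (0 - x) = r \<Longrightarrow> norm (\<phi> x) \<le> 1" using \<phi>le r by auto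
    qed (use r in auto)
    moreover have "(deriv ^^ n) \<phi> 0 = fact n * F\<phi>$n" using fps_nth_fps_expansion[OF h\<phi>, of n] by simp
    moreover have nf: "norm (fact n :: complex) = fact n" by (metis norm_of_nat of_nat_fact)
    ultimately have "fact n * norm (F\<phi>$n) \<le> fact n * (1 / r^n)" by (simp add: norm_mult)
    then have "norm (F\<phi>$n) \<le> 1 / r^n" by (rule mult_left_le_imp_le) simp
    then show ?thesis using r by (simp add: field_simps)
  qed
  have lim0: "((\<lambda>r. norm (F\<phi>$n) * r^n) \<longlongrightarrow> norm (F\<phi>$n) * 1^n) (at_left (1::real))"
    by (intro tendsto_intros)
  then have lim: "((\<lambda>r. norm (F\<phi>$n) * r^n) \<longlongrightarrow> norm (F\<phi>$n)) (at_left (1::real))"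
    by simp
  have ev: "eventually (\<lambda>r. norm (F\<phi>$n) * r^n \<le> 1) (at_left (1::real))"
    using eventually_at_left_real[of 0 "1::real"] by (rule eventually_mono) (auto intro: bnd)
  have "norm (F\<phi>$n) \<le> 1"
    by (rule tendsto_upperbound[OF lim ev]) (simp add: trivial_limit_at_left_real)
  moreover have "norm (D$0) = 2 - 2 * \<beta>"
  proof -
    have e: "D$0 = complex_of_real (2 - 2 * \<beta>)" unfolding D0 by simp
    have "norm (D$0) = \<bar>2 - 2 * \<beta>\<bar>" unfolding e by (rule norm_of_real)
    then show ?thesis using b1 by simp
  qed
  ultimately have "norm (F$n) \<le> 2 - 2 * \<beta>"
    using top by (metis mult_right_mono norm_ge_zero norm_mult mult_1)
  then show ?thesis by (simp add: tcoeff_fps F_def)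
qed



lemma binom2:
  fixes Y :: "'a::comm_ring_1"
  shows "\<exists>Z. (1 + Y)^i = 1 + of_nat i * Y + Y^2 * Z"
proof (induction i)
  case 0
  then show ?case by (intro exI[of _ 0]) simp
next
  case (Suc i)
  then obtain Z where Z: "(1 + Y)^i = 1 + of_nat i * Y + Y^2 * Z" by blast
  show ?case
    by (intro exI[of _ "Z + of_nat i + Y * Z"]) (simp add: Z algebra_simps power2_eq_square)
qed

lemma inv_coeffs:
  fixes F G :: "complex fps" and m :: nat
  assumes m: "m \<ge> 1" and F0: "F$0 = 0" and F1: "F$1 = 1"
    and Fz: "\<And>n. (\<forall>k. n \<noteq> m*k+1) \<Longrightarrow> F$n = 0" and G0: "G$0 = 0"
    and comp: "F oo G = fps_X"
  shows "G$1 = 1 \<and> G$(2*m+1) = of_nat (m+1) * (F$(m+1))^2 - F$(2*m+1)"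
proof -
  have Fz': "F$i = 0" if "i \<le> 2*m+1" "i \<noteq> 1" "i \<noteq> m+1" "i \<noteq> 2*m+1" for i
  proof (rule Fz, intro allI notI)
    fix k assume i: "i = m*k+1"
    show False
    proof (cases "k \<le> 2")
      case True then have "k = 0 \<or> k = 1 \<or> k = 2" by auto
      then show False using that i by (auto simp: mult.commute)
    next
      case False then have "m*3 \<le> m*k" by (intro mult_le_mono2) auto
      then show False using that i m by linarith
    qed
  qed
  have pz: "(G^i)$n = 0" if "n < i" for i n using startsby_zero_power_prefix[OF G0] that by blast
  have key: "fps_X $ n = G$n + F$(m+1) * (G^(m+1))$n + F$(2*m+1) * (G^(2*m+1))$n"
    if n: "n \<le> 2*m+1" for n
  proof -
    have "fps_X $ n = (F oo G)$n" by (simp add: comp)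
    also have "\<dots> = (\<Sum>i=0..n. F$i * (G^i)$n)" by (rule fps_compose_nth)
    also have "\<dots> = (\<Sum>i=0..2*m+1. F$i * (G^i)$n)"
      using n by (intro sum.mono_neutral_left) (auto simp: pz)
    also have "\<dots> = (\<Sum>i\<in>{1, m+1, 2*m+1}. F$i * (G^i)$n)"
      by (rule sum.mono_neutral_right) (auto simp: Fz')
    also have "\<dots> = G$n + F$(m+1) * (G^(m+1))$n + F$(2*m+1) * (G^(2*m+1))$n"
      using m F1 by (simp add: algebra_simps)
    finally show ?thesis .
  qed
  have G1: "G$1 = 1"
    using key[of 1] pz[of 1 "m+1"] pz[of 1 "2*m+1"] m by simp
  have Gk: "G$k = 0" if "2 \<le> k" "k \<le> m" for k
    using key[of k] pz[of k "m+1"] pz[of k "2*m+1"] that by simp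
  define T where "T = Abs_fps (\<lambda>j. G$(j+m+1))"
  define Y where "Y = fps_X^m * T"
  have GXY: "G = fps_X * (1 + Y)"
  proof (rule fps_ext)
    fix k
    show "G$k = (fps_X * (1 + Y))$k"
    proof (cases "k = 0")
      case True then show ?thesis by (simp add: G0)
    next
      case k0: False
      have "(fps_X * (1 + Y))$k = (1 + Y)$(k-1)" using k0 by (simp add: fps_X_mult_nth)
      also have "\<dots> = (if k - 1 = 0 then 1 else 0) + (if k - 1 < m then 0 else G$k)"
        using k0 by (simp add: Y_def T_def fps_X_power_mult_nth)
      also have "\<dots> = G$k"
      proof (cases "k = 1")
        case True then show ?thesis using G1 m by simp
      next
        case False
        then show ?thesis using Gk[of k] k0 by auto
      qed
      finally show ?thesis ..
    qed
  qed
  have Yc: "((1+Y)^i)$j = (if j = 0 then 1 else 0) + (if j = m then of_nat i * G$(m+1) else 0)"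
    if j: "j \<le> m" for i j
  proof -
    obtain Z where Z: "(1 + Y)^i = 1 + of_nat i * Y + Y^2 * Z" using binom2 by blast
    have Y2: "Y^2 * Z = fps_X^(2*m) * (T^2 * Z)"
      by (simp add: Y_def power_mult_distrib power_mult[symmetric] mult.commute mult.left_commute)
    have "((1+Y)^i)$j = (1::complex fps)$j + (fps_const (of_nat i) * Y)$j + (fps_X^(2*m) * (T^2 * Z))$j"
      by (simp only: Z Y2 fps_add_nth fps_of_nat)
    also have "\<dots> = (if j = 0 then 1 else 0) + (if j = m then of_nat i * G$(m+1) else 0)"
      using j m by (auto simp: Y_def T_def fps_X_power_mult_nth)
    finally show ?thesis .
  qed
  have Gp: "(G^i)$n = (if n < i then 0 else ((1+Y)^i)$(n-i))" for i n
    by (simp add: GXY power_mult_distrib fps_X_power_mult_nth)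
  have Gm1: "G$(m+1) = - F$(m+1)"
    using key[of "m+1"] Gp[of "m+1" "m+1"] Yc[of 0 "m+1"] pz[of "m+1" "2*m+1"] m by (simp add: eq_neg_iff_add_eq_0)
  have "G$(2*m+1) = of_nat (m+1) * (F$(m+1))^2 - F$(2*m+1)"
  proof -
    have a: "(G^(m+1))$(2*m+1) = of_nat (m+1) * G$(m+1)"
      using Gp[of "m+1" "2*m+1"] Yc[of m "m+1"] m by simp
    have b: "(G^(2*m+1))$(2*m+1) = 1"
      using Gp[of "2*m+1" "2*m+1"] Yc[of 0 "2*m+1"] m by simp
    have "0 = G$(2*m+1) + F$(m+1) * (of_nat (m+1) * G$(m+1)) + F$(2*m+1)"
      using key[of "2*m+1"] a b m by simp
    then show ?thesis unfolding Gm1 by (simp add: algebra_simps power2_eq_square eq_neg_iff_add_eq_0)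
  qed
  then show ?thesis using G1 by simp
qed



lemma J_simp: "J_fun m 1 1 0 0 h z = deriv h z"
proof -
  have "rusch m 0 h = h" by (rule ext) (simp add: rusch_def)
  then show ?thesis by (simp add: J_fun_def)
qed

lemma tcoeff_deriv: "tcoeff (deriv h) n = of_nat (Suc n) * tcoeff h (Suc n)"
proof -
  define X where "X = (deriv ^^ n) (deriv h) 0"
  have eq: "(deriv ^^ Suc n) h 0 = X" unfolding X_def by (subst funpow_Suc_right) simp
  have L: "tcoeff (deriv h) n = X / fact n" by (simp add: tcoeff_def X_def)
  have R: "tcoeff h (Suc n) = X / fact (Suc n)" unfolding tcoeff_def eq by (simp only: of_nat_fact)
  have "of_nat (Suc n) * (X / fact (Suc n)) = (of_nat (Suc n) * X) / (of_nat (Suc n) * fact n)"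
    by (simp only: fact_Suc times_divide_eq_right)
  also have "\<dots> = X / fact n" by (rule mult_divide_mult_cancel_left) (rule of_nat_neq_0)
  finally show ?thesis using L R by simp
qed

lemma final_arith:
  fixes A B C \<beta> :: real and m :: nat
  assumes m: "m \<ge> 1" and b: "\<beta> < 1" and A0: "A \<ge> 0" and B0: "B \<ge> 0"
    and h1: "(real m + 1) * A \<le> 2 * (1 - \<beta>)"
    and h2: "(2 * real m + 1) * B \<le> 2 * (1 - \<beta>)"
    and h3: "(2 * real m + 1) * C \<le> 2 * (1 - \<beta>)"
    and tri: "(real m + 1) * A^2 \<le> C + B"
  shows "A \<le> min (2 * (1 - \<beta>) / (1 + real m)) (2 * sqrt ((1 - \<beta>) / ((real m + 1) * (1 + 2 * real m))))
       \<and> B \<le> 2 * (1 - \<beta>) / (1 + 2 * real m)"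
proof -
  have a1: "A \<le> 2 * (1 - \<beta>) / (1 + real m)"
    using h1 by (simp add: pos_le_divide_eq algebra_simps)
  have b1: "B \<le> 2 * (1 - \<beta>) / (1 + 2 * real m)"
    using h2 by (simp add: pos_le_divide_eq algebra_simps)
  have "(2 * real m + 1) * ((real m + 1) * A^2) \<le> (2 * real m + 1) * (C + B)"
    using tri by (intro mult_left_mono) auto
  also have "\<dots> \<le> 4 * (1 - \<beta>)" using h2 h3 by (simp add: algebra_simps)
  finally have le: "((real m + 1) * (1 + 2 * real m)) * A^2 \<le> 4 * (1 - \<beta>)"
    by (simp add: algebra_simps)
  define P where "P = (real m + 1) * (1 + 2 * real m)"
  have P0: "P > 0" unfolding P_def by (intro mult_pos_pos) auto
  have "A^2 \<le> 4 * (1 - \<beta>) / P"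
    by (subst pos_le_divide_eq[OF P0]) (use le in \<open>simp add: P_def mult.commute\<close>)
  then have "A^2 \<le> 4 * ((1 - \<beta>) / ((real m + 1) * (1 + 2 * real m)))"
    unfolding P_def by simp
  then have "sqrt (A^2) \<le> sqrt (4 * ((1 - \<beta>) / ((real m + 1) * (1 + 2 * real m))))"
    by (rule real_sqrt_le_mono)
  moreover have "sqrt (A^2) = A" using A0 by simp
  moreover have s4: "sqrt (4::real) = 2" by (rule real_sqrt_unique) auto
  moreover have "sqrt (4 * ((1 - \<beta>) / ((real m + 1) * (1 + 2 * real m))))
      = sqrt 4 * sqrt ((1 - \<beta>) / ((real m + 1) * (1 + 2 * real m)))" by (rule real_sqrt_mult)
  ultimately have a2: "A \<le> 2 * sqrt ((1 - \<beta>) / ((real m + 1) * (1 + 2 * real m)))"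
    by simp
  show ?thesis using a1 a2 b1 by simp
qed


theorem corollary4:
  fixes m :: nat and \<beta> :: real and f :: "complex \<Rightarrow> complex"
  assumes "m \<ge> 1" and "0 \<le> \<beta>" and "\<beta> < 1"
    and "f \<in> Theta m 1 1 0 0 \<beta>"
  shows "norm (tcoeff f (m + 1)) \<le>
           min (2 * (1 - \<beta>) / (1 + real m))
               (2 * sqrt ((1 - \<beta>) / ((real m + 1) * (1 + 2 * real m))))
       \<and> norm (tcoeff f (2 * m + 1)) \<le> 2 * (1 - \<beta>) / (1 + 2 * real m)"
proof -
  note m = assms(1) and b1 = assms(3)
  from assms(4) have fS: "f \<in> Sigma_m m"
    and Jf: "\<forall>z\<in>ball 0 1. Re (J_fun m 1 1 0 0 f z) > \<beta>"
    and Jg: "\<forall>g. inv_extension f g \<longrightarrow> (\<forall>w\<in>ball 0 1. Re (J_fun m 1 1 0 0 g w) > \<beta>)"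
    unfolding Theta_def by auto
  from fS have fA: "mfold_A m f" and finj: "inj_on f (ball 0 1)" and ex: "\<exists>g. inv_extension f g"
    unfolding Sigma_m_def by auto
  from ex obtain g where ginv: "inv_extension f g" by blast
  from fA have fhol: "f holomorphic_on ball 0 1" and t1: "tcoeff f 1 = 1"
    and tz: "\<And>n. (\<forall>k. n \<noteq> m*k+1) \<Longrightarrow> tcoeff f n = 0"
    unfolding mfold_A_def by auto
  from ginv have ghol: "g holomorphic_on ball 0 1"
    and "\<exists>r>0. \<forall>w\<in>ball 0 r. g w \<in> ball 0 1 \<and> f (g w) = w"
    unfolding inv_extension_def by auto
  then obtain r where r: "r > 0" and rr: "\<And>w. w \<in> ball 0 r \<Longrightarrow> g w \<in> ball 0 1 \<and> f (g w) = w"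
    by blast
  have Ref: "\<And>z. z \<in> ball 0 1 \<Longrightarrow> Re (deriv f z) > \<beta>" using Jf by (simp add: J_simp)
  have Reg: "\<And>z. z \<in> ball 0 1 \<Longrightarrow> Re (deriv g z) > \<beta>" using Jg ginv by (simp add: J_simp)
  have f'hol: "deriv f holomorphic_on ball 0 1" by (rule holomorphic_deriv[OF fhol]) auto
  have g'hol: "deriv g holomorphic_on ball 0 1" by (rule holomorphic_deriv[OF ghol]) auto
  have df0: "deriv f 0 = 1" using t1 by (simp add: tcoeff_def)
  define F where "F = fps_expansion f 0"
  define G where "G = fps_expansion g 0"
  have tcF: "tcoeff f n = F$n" for n by (simp add: tcoeff_fps F_def)
  have tcG: "tcoeff g n = G$n" for n by (simp add: tcoeff_fps G_def)
  have "tcoeff f 0 = 0" by (rule tz) auto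
  then have f0: "f 0 = 0" by (simp add: tcoeff_def)
  have g0: "g 0 = 0"
  proof -
    have g0b: "g 0 \<in> ball 0 1" and fg0: "f (g 0) = 0" using rr[of 0] r by auto
    have "f (g 0) = f 0" using fg0 f0 by simp
    then show ?thesis by (rule inj_onD[OF finj]) (use g0b in auto)
  qed
  have hF: "f has_fps_expansion F" unfolding F_def
    by (rule has_fps_expansion_fps_expansion[OF _ _ fhol]) auto
  have hG: "g has_fps_expansion G" unfolding G_def
    by (rule has_fps_expansion_fps_expansion[OF _ _ ghol]) auto
  have G0: "G$0 = 0" using fps_nth_fps_expansion[OF hG, of 0] g0 by simp
  have comp: "F oo G = fps_X"
  proof -
    have h1: "(f \<circ> g) has_fps_expansion (F oo G)" by (rule has_fps_expansion_compose[OF hF hG G0])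
    have ev: "eventually (\<lambda>w. (f \<circ> g) w = w) (nhds 0)"
    proof -
      have "eventually (\<lambda>w. w \<in> ball 0 r) (nhds 0)"
        using r by (intro eventually_nhds_in_open) auto
      then show ?thesis by (rule eventually_mono) (use rr in auto)
    qed
    have "(\<lambda>w. w) has_fps_expansion (F oo G)"
      using has_fps_expansion_cong[OF ev refl] h1 by (simp add: o_def)
    moreover have "(\<lambda>w. w) has_fps_expansion fps_X" by (rule has_fps_expansion_fps_X)
    ultimately show ?thesis by (rule fps_expansion_unique_complex)
  qed
  have F0: "F$0 = 0" using f0 tcF[of 0] by (simp add: tcoeff_def)
  have F1: "F$1 = 1" using t1 tcF[of 1] by simp
  have Fz: "\<And>n. (\<forall>k. n \<noteq> m*k+1) \<Longrightarrow> F$n = 0" using tz tcF by simp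
  from inv_coeffs[OF m F0 F1 Fz G0 comp]
  have G1: "G$1 = 1" and G2: "G$(2*m+1) = of_nat (m+1) * (F$(m+1))^2 - F$(2*m+1)" by auto
  have dg0: "deriv g 0 = 1" using G1 tcG[of 1] by (simp add: tcoeff_def)
  have m1: "m \<ge> 1" "2*m \<ge> 1" using m by auto
  have c1: "norm (tcoeff (deriv f) m) \<le> 2 * (1 - \<beta>)"
    by (rule carath[OF f'hol df0 Ref b1 m1(1)])
  have c2: "norm (tcoeff (deriv f) (2*m)) \<le> 2 * (1 - \<beta>)"
    by (rule carath[OF f'hol df0 Ref b1 m1(2)])
  have c3: "norm (tcoeff (deriv g) (2*m)) \<le> 2 * (1 - \<beta>)"
    by (rule carath[OF g'hol dg0 Reg b1 m1(2)])
  define a where "a = F$(m+1)"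
  define b where "b = F$(2*m+1)"
  have nS: "norm (1 + of_nat k :: complex) = real k + 1" for k
  proof -
    have "norm (1 + of_nat k :: complex) = norm (of_nat (Suc k) :: complex)" by simp
    also have "\<dots> = real (Suc k)" by (rule norm_of_nat)
    finally show ?thesis by simp
  qed
  have nS2: "norm (1 + 2 * of_nat k :: complex) = 2 * real k + 1" for k
    using nS[of "2*k"] by simp
  have h1: "(real m + 1) * norm a \<le> 2 * (1 - \<beta>)"
    using c1 unfolding tcoeff_deriv a_def tcF by (simp add: norm_mult nS nS2)
  have h2: "(2 * real m + 1) * norm b \<le> 2 * (1 - \<beta>)"
    using c2 unfolding tcoeff_deriv b_def tcF by (simp add: norm_mult nS nS2)
  have h3: "(2 * real m + 1) * norm (of_nat (m+1) * a^2 - b) \<le> 2 * (1 - \<beta>)"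
    using c3 unfolding tcoeff_deriv tcG
    by (simp add: norm_mult nS nS2 G2[unfolded a_def[symmetric] b_def[symmetric], simplified])
  have tri: "(real m + 1) * (norm a)^2 \<le> norm (of_nat (m+1) * a^2 - b) + norm b"
  proof -
    have "(real m + 1) * (norm a)^2 = norm (of_nat (m+1) * a^2)" by (simp add: norm_mult norm_power nS)
    also have "\<dots> = norm ((of_nat (m+1) * a^2 - b) + b)" by simp
    also have "\<dots> \<le> norm (of_nat (m+1) * a^2 - b) + norm b" by (rule norm_triangle_ineq)
    finally show ?thesis .
  qed
  have "norm a \<le> min (2 * (1 - \<beta>) / (1 + real m)) (2 * sqrt ((1 - \<beta>) / ((real m + 1) * (1 + 2 * real m))))
       \<and> norm b \<le> 2 * (1 - \<beta>) / (1 + 2 * real m)"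
    by (rule final_arith[OF m b1 norm_ge_zero norm_ge_zero h1 h2 h3 tri])
  then show ?thesis unfolding tcF a_def b_def .
qed

end
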